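(* Let $\{\rho_\theta\}_{\theta\in\Theta}$ be a differentiable family of density operators on a $d$-dimensional Hilbert space. For $\varepsilon\in(0,1)$ set $\rho_\theta^\varepsilon:=(1-\varepsilon)\rho_\theta+\varepsilon\, I/d$. Then $$I_F(\theta;\{\rho_\theta\}_\theta)=\lim_{\varepsilon\to 0}I_F(\theta;\{\rho^\varepsilon_\theta\}_\theta),$$ including the case where the left-hand side equals $+\infty$.
   Context: All Hilbert spaces are finite-dimensional; $\Theta\subseteq\mathbb{R}$ is the parameter set and $\partial_\theta$ denotes the derivative with respect to $\theta$. For a differentiable family $\{\rho_\theta\}_\theta$ of density operators with spectral decomposition $\rho_\theta=\sum_j\lambda^j_\theta|\psi^j_\theta\rangle\langle\psi^j_\theta|$ (including zero eigenvalues), let $\Pi^\perp_{\rho_\theta}$ be the projection onto the kernel of $\rho_\theta$. The SLD Fisher information is $I_F(\theta;\{\rho_\theta\}_\theta)=2\sum_{j,k:\lambda^j_\theta+\lambda^k_\theta>0}\frac{|\langle\psi^j_\theta|(\partial_\theta\rho_\theta)|\psi^k_\theta\rangle|^2}{\lambda^j_\theta+\lambda^k_\theta}$ if $\Pi^\perp_{\rho_\theta}(\partial_\theta\rho_\theta)\Pi^\perp_{\rho_\theta}=0$, and $+\infty$ otherwise. *)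

theory Defs
  imports "HOL-Analysis.Analysis"
begin

text \<open>Hilbert space: complex^'n with 'n a finite index type, d = CARD('n).
  Operators: complex^'n^'n (row i, column k entry A$i$k).\<close>

definition cinner :: "complex^'n \<Rightarrow> complex^'n \<Rightarrow> complex" where
  "cinner v w = (\<Sum>i\<in>UNIV. cnj (v$i) * w$i)"

definition outer :: "complex^'n \<Rightarrow> complex^'n \<Rightarrow> complex^'n^'n" where
  "outer v w = (\<chi> i k. v$i * cnj (w$k))"

definition hermitian_op :: "complex^'n^'n \<Rightarrow> bool" where
  "hermitian_op A \<longleftrightarrow> (\<forall>i k. A$i$k = cnj (A$k$i))"

definition mtrace :: "complex^'n^'n \<Rightarrow> complex" where
  "mtrace A = (\<Sum>i\<in>UNIV. A$i$i)"

definition density_op :: "complex^'n^'n \<Rightarrow> bool" where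
  "density_op A \<longleftrightarrow> hermitian_op A \<and> (\<forall>v. 0 \<le> Re (cinner v (A *v v))) \<and> mtrace A = 1"

definition is_spectral_decomp :: "complex^'n^'n \<Rightarrow> ('n \<Rightarrow> real) \<Rightarrow> ('n \<Rightarrow> complex^'n) \<Rightarrow> bool" where
  "is_spectral_decomp A lam psi \<longleftrightarrow>
     (\<forall>j k. cinner (psi j) (psi k) = (if j = k then 1 else 0)) \<and>
     A = (\<Sum>j\<in>UNIV. (\<chi> a b. complex_of_real (lam j) * outer (psi j) (psi j) $ a $ b))"

definition kernel_proj :: "complex^'n^'n \<Rightarrow> complex^'n^'n" where
  "kernel_proj A = (THE P. hermitian_op P \<and> P ** P = P \<and>
                          range (\<lambda>y. P *v y) = {v. A *v v = 0})"

definition sld_fisher :: "complex^'n^'n \<Rightarrow> complex^'n^'n \<Rightarrow> ereal" where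
  "sld_fisher A D =
     (if kernel_proj A ** D ** kernel_proj A = 0 then
        (let (lam, psi) = (SOME (lam, psi). is_spectral_decomp A lam psi) in
           ereal (2 * (\<Sum>(j,k)\<in>{(j,k). lam j + lam k > 0}.
                        (cmod (cinner (psi j) (D *v psi k)))^2 / (lam j + lam k))))
      else \<infinity>)"

definition fisher_info :: "(real \<Rightarrow> complex^'n^'n) \<Rightarrow> real \<Rightarrow> ereal" where
  "fisher_info rho \<theta> = sld_fisher (rho \<theta>) (vector_derivative rho (at \<theta>))"

end

theory Submission
  imports Defs
begin


definition ONB :: "('n::finite \<Rightarrow> complex^'n) \<Rightarrow> bool" where
  "ONB psi \<longleftrightarrow> (\<forall>j k. cinner (psi j) (psi k) = (if j = k then 1 else 0))"

lemma ONB_complete: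
  fixes psi :: "'n::finite \<Rightarrow> complex^'n"
  assumes "ONB psi"
  shows "(\<Sum>j\<in>UNIV. psi j $ a * cnj (psi j $ b)) = (if a = b then 1 else 0)"
proof -
  define U :: "complex^'n^'n" where "U = (\<chi> a j. psi j $ a)"
  define UH :: "complex^'n^'n" where "UH = (\<chi> j a. cnj (psi j $ a))"
  have "UH ** U = mat 1"
    using assms unfolding ONB_def
    by (simp add: U_def UH_def matrix_matrix_mult_def mat_def vec_eq_iff cinner_def)
  hence "U ** UH = mat 1" using matrix_left_right_inverse by blast
  hence "(U ** UH) $ a $ b = mat 1 $ a $ b" by simp
  thus ?thesis by (simp add: U_def UH_def matrix_matrix_mult_def mat_def)
qed

lemma ONB_expand:
  fixes psi :: "'n::finite \<Rightarrow> complex^'n"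
  assumes "ONB psi"
  shows "v $ a = (\<Sum>j\<in>UNIV. cinner (psi j) v * psi j $ a)"
proof -
  have "(\<Sum>j\<in>UNIV. cinner (psi j) v * psi j $ a)
      = (\<Sum>j\<in>UNIV. \<Sum>i\<in>UNIV. v $ i * (psi j $ a * cnj (psi j $ i)))"
    by (simp add: cinner_def sum_distrib_left sum_distrib_right mult_ac)
  also have "\<dots> = (\<Sum>i\<in>UNIV. v $ i * (\<Sum>j\<in>UNIV. psi j $ a * cnj (psi j $ i)))"
    by (subst sum.swap) (simp add: sum_distrib_left)
  also have "\<dots> = v $ a" by (simp add: ONB_complete[OF assms] if_distrib eq_commute cong: if_cong)
  finally show ?thesis by simp
qed

lemma ONB_parseval:
  fixes psi :: "'n::finite \<Rightarrow> complex^'n"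
  assumes "ONB psi"
  shows "(\<Sum>j\<in>UNIV. cinner x (psi j) * cinner (psi j) y) = cinner x y"
proof -
  have "(\<Sum>j\<in>UNIV. cinner x (psi j) * cinner (psi j) y)
     = (\<Sum>j\<in>UNIV. \<Sum>a\<in>UNIV. cnj (x $ a) * (psi j $ a * cinner (psi j) y))"
    by (simp add: cinner_def sum_distrib_left sum_distrib_right mult_ac)
  also have "\<dots> = (\<Sum>a\<in>UNIV. cnj (x $ a) * (\<Sum>j\<in>UNIV. cinner (psi j) y * psi j $ a))"
    by (subst sum.swap) (simp add: sum_distrib_left mult_ac)
  also have "\<dots> = cinner x y" using ONB_expand[OF assms, of y, symmetric] by (simp add: cinner_def)
  finally show ?thesis .
qed

lemma scaleR_nth: "(c *\<^sub>R (v::complex^'n)) $ i = of_real c * v $ i"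
  unfolding vector_scaleR_component by (simp add: scaleR_conv_of_real)
lemma scaleR_smult: "c *\<^sub>R (v::complex^'n) = complex_of_real c *s v"
  unfolding vec_eq_iff scaleR_nth by simp
lemma cinner_add_left: "cinner (u + v) w = cinner u w + cinner v w"
  by (simp add: cinner_def ring_distribs sum.distrib)
lemma cinner_add_right: "cinner u (v + w) = cinner u v + cinner u w"
  by (simp add: cinner_def ring_distribs sum.distrib)
lemma cinner_diff_left: "cinner (u - v) w = cinner u w - cinner v w"
  by (simp add: cinner_def ring_distribs sum_subtractf)
lemma cinner_diff_right: "cinner u (v - w) = cinner u v - cinner u w"
  by (simp add: cinner_def ring_distribs sum_subtractf)
lemma cinner_smult_left: "cinner (c *s u) w = cnj c * cinner u w"
  by (simp add: cinner_def sum_distrib_left mult_ac)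
lemma cinner_smult_right: "cinner u (c *s w) = c * cinner u w"
  by (simp add: cinner_def sum_distrib_left mult_ac)
lemma cinner_scaleR_left: "cinner (c *\<^sub>R u) w = of_real c * cinner u w"
  unfolding cinner_def scaleR_nth by (simp add: sum_distrib_left mult_ac)
lemma cinner_scaleR_right: "cinner u (c *\<^sub>R w) = of_real c * cinner u w"
  unfolding cinner_def scaleR_nth by (simp add: sum_distrib_left mult_ac)
lemma cinner_zero_left[simp]: "cinner 0 w = 0" by (simp add: cinner_def)
lemma cinner_zero_right[simp]: "cinner u 0 = 0" by (simp add: cinner_def)
lemma cinner_cnj: "cinner v u = cnj (cinner u v)"
  by (simp add: cinner_def mult_ac)
lemma cinner_self: "cinner w w = of_real ((norm w)^2)"
proof -
  have "(norm w)^2 = (\<Sum>i\<in>UNIV. (cmod (w $ i))^2)"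
    unfolding norm_vec_def L2_set_def by (simp add: sum_nonneg)
  hence "of_real ((norm w)^2) = (\<Sum>i\<in>UNIV. complex_of_real ((cmod (w $ i))^2))" by simp
  also have "\<dots> = cinner w w" unfolding cinner_def
  proof (rule sum.cong[OF refl])
    fix i show "complex_of_real ((cmod (w $ i))^2) = cnj (w $ i) * w $ i"
      using complex_norm_square[of "w$i"] by (simp add: mult.commute)
  qed
  finally show ?thesis by simp
qed
lemma cinner_self_eq_0: "cinner w w = 0 \<longleftrightarrow> w = 0"
  by (simp add: cinner_self)
lemma herm_inner:
  assumes "hermitian_op A"
  shows "cinner u (A *v v) = cinner (A *v u) v"
proof -
  have h: "\<And>i k. cnj (A $ k $ i) = A $ i $ k"
    using assms unfolding hermitian_op_def by (metis complex_cnj_cnj)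
  have "cinner u (A *v v) = (\<Sum>i\<in>UNIV. \<Sum>k\<in>UNIV. cnj (u $ i) * A $ i $ k * v $ k)"
    by (simp add: cinner_def matrix_vector_mult_def sum_distrib_left mult_ac)
  also have "\<dots> = (\<Sum>k\<in>UNIV. \<Sum>i\<in>UNIV. cnj (A $ k $ i * u $ i) * v $ k)"
    by (subst sum.swap) (simp add: h mult_ac)
  also have "\<dots> = cinner (A *v u) v"
    by (simp add: cinner_def matrix_vector_mult_def sum_distrib_right)
  finally show ?thesis .
qed
lemma mv_add: "A *v (u + v) = A *v u + A *v (v::'a::comm_ring_1^'n)"
  by (simp add: matrix_vector_right_distrib)
lemma mv_smult: "A *v (c *s v) = c *s (A *v (v::complex^'n))"
  by (simp add: vec_eq_iff matrix_vector_mult_def sum_distrib_left mult_ac)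
lemma mv_scaleR: "A *v (c *\<^sub>R v) = c *\<^sub>R (A *v (v::complex^'n))"
  unfolding scaleR_smult by (rule mv_smult)
lemma mv_diff: "A *v (u - v) = A *v u - A *v (v::complex^'n)"
  by (simp add: vec_eq_iff matrix_vector_mult_def ring_distribs sum_subtractf)

lemma sum_delta_mult_right[simp]:
  "(\<Sum>i\<in>(UNIV::'n::finite set). g i * (if i = a then 1 else 0)) = (g a :: 'b::semiring_1)"
proof -
  have "(\<Sum>i\<in>(UNIV::'n set). g i * (if i = a then 1 else 0)) = (\<Sum>i\<in>UNIV. if i = a then g i else 0)"
    by (rule sum.cong) auto
  thus ?thesis by simp
qed
lemma sum_delta_mult_left[simp]:
  "(\<Sum>i\<in>(UNIV::'n::finite set). (if i = a then 1 else 0) * g i) = (g a :: 'b::semiring_1)"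
proof -
  have "(\<Sum>i\<in>(UNIV::'n set). (if i = a then 1 else 0) * g i) = (\<Sum>i\<in>UNIV. if i = a then g i else 0)"
    by (rule sum.cong) auto
  thus ?thesis by simp
qed

lemma nonzero_perp:
  fixes f :: "nat \<Rightarrow> complex^'n"
  assumes on: "\<forall>i<k. \<forall>j<k. cinner (f i) (f j) = (if i = j then 1 else 0)" and kn: "k < CARD('n)"
  shows "\<exists>w. w \<noteq> 0 \<and> (\<forall>i<k. cinner (f i) w = 0)"
proof (rule ccontr)
  assume H: "\<not> ?thesis"
  define w where "w a = (\<chi> b. (if b = a then 1 else 0) - (\<Sum>i<k. cnj (f i $ a) * f i $ b))" for a
  have inner: "cinner (f l) (w a) = 0" if l: "l < k" for l a
  proof -
    have "cinner (f l) (w a) = cnj (f l $ a) - (\<Sum>b\<in>UNIV. \<Sum>i<k. cnj (f i $ a) * (cnj (f l $ b) * f i $ b))"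
      by (simp add: w_def cinner_def right_diff_distrib sum_subtractf sum_distrib_left mult_ac mult_if_delta)
    also have "(\<Sum>b\<in>UNIV. \<Sum>i<k. cnj (f i $ a) * (cnj (f l $ b) * f i $ b)) = (\<Sum>i<k. cnj (f i $ a) * cinner (f l) (f i))"
      by (subst sum.swap) (simp add: cinner_def sum_distrib_left)
    also have "\<dots> = (\<Sum>i<k. if i = l then cnj (f i $ a) else 0)"
      by (rule sum.cong) (use on l in auto)
    also have "\<dots> = cnj (f l $ a)" using l by simp
    finally show ?thesis by simp
  qed
  have "w a = 0" for a using H inner by blast
  hence z: "w a $ a = 0" for a by simp
  have one: "(\<Sum>i<k. cnj (f i $ a) * f i $ a) = 1" for a
    using z[of a] by (simp add: w_def)
  have "of_nat CARD('n) = (\<Sum>a\<in>UNIV. \<Sum>i<k. cnj (f i $ a) * f i $ a)"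
    by (simp add: one)
  also have "\<dots> = (\<Sum>i<k. cinner (f i) (f i))" by (subst sum.swap) (simp add: cinner_def)
  also have "\<dots> = of_nat k" using on by simp
  finally have "CARD('n) = k" by (simp only: of_nat_eq_iff)
  with kn show False by simp
qed


lemma cont_cinner: "continuous_on UNIV (\<lambda>w. cinner u (w::complex^'n))"
  unfolding cinner_def by (intro continuous_intros)
lemma cont_q: "continuous_on UNIV (\<lambda>w. Re (cinner w (A *v (w::complex^'n))))"
  unfolding cinner_def matrix_vector_mult_def by (intro continuous_intros)
lemma quad0: fixes a b :: real assumes "\<forall>t. a * t + b * t^2 \<le> 0" shows "a = 0"
proof (rule ccontr)
  assume a: "a \<noteq> 0"
  define e where "e = 1 / (\<bar>b\<bar> + 1)"
  have e0: "e > 0" unfolding e_def by (simp add: add_nonneg_pos)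
  have be: "\<bar>b\<bar> * e < 1" unfolding e_def by (simp add: field_simps)
  have "- \<bar>b\<bar> \<le> b" by simp
  hence "- \<bar>b\<bar> * e \<le> b * e" using e0 by (intro mult_right_mono) auto
  hence "- (\<bar>b\<bar> * e) \<le> b * e" by simp
  hence pe: "1 + b * e > 0" using be by linarith
  have "a * (a * e) + b * (a * e)^2 = a^2 * e * (1 + b * e)"
    by (simp add: algebra_simps power2_eq_square)
  also have "\<dots> > 0" using a e0 pe by simp
  finally show False using assms by (metis not_le)
qed

lemma eig_step:
  fixes A :: "complex^'n^'n" and f :: "nat \<Rightarrow> complex^'n"
  assumes herm: "hermitian_op A"
    and on: "\<forall>i<k. \<forall>j<k. cinner (f i) (f j) = (if i = j then 1 else 0)"
    and eig: "\<forall>i<k. A *v f i = complex_of_real (lam i) *s f i"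
    and kn: "k < CARD('n)"
  shows "\<exists>m M. (\<forall>i<k. cinner (f i) m = 0) \<and> cinner m m = 1 \<and> A *v m = complex_of_real M *s m"
proof -
  define W where "W = {w::complex^'n. \<forall>i<k. cinner (f i) w = 0}"
  define q where "q w = Re (cinner w (A *v w))" for w
  obtain w0 where w0: "w0 \<noteq> 0" "w0 \<in> W" using nonzero_perp[OF on kn] unfolding W_def by blast
  have Wsc: "c *\<^sub>R w \<in> W" if "w \<in> W" for c w using that by (simp add: W_def cinner_scaleR_right)
  have Wadd: "u + w \<in> W" if "u \<in> W" "w \<in> W" for u w using that by (simp add: W_def cinner_add_right)
  have Wsm: "c *s w \<in> W" if "w \<in> W" for c w using that by (simp add: W_def cinner_smult_right)
  have clW: "closed W"
  proof -
    have "W = (\<Inter>i\<in>{..<k}. {w. cinner (f i) w = 0})" unfolding W_def by auto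
    moreover have "closed {w. cinner (f i) w = 0}" for i
      using continuous_closed_preimage_constant[OF cont_cinner[of "f i"] closed_UNIV, of 0] by simp
    ultimately show ?thesis by auto
  qed
  define S where "S = sphere 0 1 \<inter> W"
  have cS: "compact S" unfolding S_def by (intro compact_Int_closed clW compact_sphere)
  have "(1 / norm w0) *\<^sub>R w0 \<in> S" using w0 Wsc unfolding S_def by simp
  hence neS: "S \<noteq> {}" by blast
  obtain m where mS: "m \<in> S" and mmax: "\<forall>y\<in>S. q y \<le> q m"
    using continuous_attains_sup[OF cS neS continuous_on_subset[OF cont_q subset_UNIV]]
    unfolding q_def by blast
  define M where "M = q m"
  have mW: "m \<in> W" and nm: "norm m = 1" using mS unfolding S_def by auto
  have mm: "cinner m m = 1" using nm by (simp add: cinner_self)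
  have qsc: "q (c *\<^sub>R w) = c^2 * q w" for c w
    by (simp add: q_def mv_scaleR cinner_scaleR_left cinner_scaleR_right power2_eq_square)
  have bound: "q w \<le> M * (norm w)^2" if "w \<in> W" for w
  proof (cases "w = 0")
    case True thus ?thesis by (simp add: q_def)
  next
    case False
    have "(1 / norm w) *\<^sub>R w \<in> S" using that Wsc False unfolding S_def by simp
    hence "q ((1 / norm w) *\<^sub>R w) \<le> M" using mmax M_def by blast
    hence "q w / (norm w)^2 \<le> M" by (simp add: qsc power_divide)
    thus ?thesis using False by (simp add: field_simps)
  qed
  define z where "z = A *v m - complex_of_real M *s m"
  have reZ: "Re (cinner u z) = 0" if uW: "u \<in> W" for u
  proof -
    have "\<forall>t. (2 * Re (cinner u z)) * t + (q u - M * (norm u)^2) * t^2 \<le> 0"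
    proof
      fix t :: real
      have vW: "m + t *\<^sub>R u \<in> W" using mW uW Wsc Wadd by blast
      have h1: "cinner m (A *v u) = cnj (cinner u (A *v m))"
        using herm_inner[OF herm, of m u] cinner_cnj by metis
      have "q (m + t *\<^sub>R u) = q m + 2 * t * Re (cinner u (A *v m)) + t^2 * q u"
        by (simp add: q_def mv_add mv_scaleR cinner_add_left cinner_add_right cinner_scaleR_left
            cinner_scaleR_right h1 power2_eq_square algebra_simps)
      moreover have "(norm (m + t *\<^sub>R u))^2 = 1 + 2 * t * Re (cinner u m) + t^2 * (norm u)^2"
      proof -
        have "complex_of_real ((norm (m + t *\<^sub>R u))^2) = cinner (m + t *\<^sub>R u) (m + t *\<^sub>R u)"
          by (simp add: cinner_self)
        also have "\<dots> = 1 + of_real t * (cinner m u + cinner u m) + of_real (t^2) * cinner u u"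
          by (simp add: cinner_add_left cinner_add_right cinner_scaleR_left cinner_scaleR_right mm
              power2_eq_square algebra_simps)
        finally have "(norm (m + t *\<^sub>R u))^2 = Re (1 + of_real t * (cinner m u + cinner u m) + of_real (t^2) * cinner u u)"
          by (metis Re_complex_of_real)
        also have "\<dots> = 1 + 2 * t * Re (cinner u m) + t^2 * (norm u)^2"
          using cinner_cnj[of m u] by (simp add: cinner_self)
        finally show ?thesis .
      qed
      moreover have "q (m + t *\<^sub>R u) \<le> M * (norm (m + t *\<^sub>R u))^2" using bound vW by blast
      moreover have "Re (cinner u (A *v m)) = Re (cinner u z) + M * Re (cinner u m)"
        by (simp add: z_def cinner_diff_right cinner_smult_right)
      ultimately have "q m + 2 * t * (Re (cinner u z) + M * Re (cinner u m)) + t^2 * q u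
          \<le> M * (1 + 2 * t * Re (cinner u m) + t^2 * (norm u)^2)" by simp
      thus "(2 * Re (cinner u z)) * t + (q u - M * (norm u)^2) * t^2 \<le> 0"
        unfolding M_def by (simp add: algebra_simps)
    qed
    from quad0[OF this] show ?thesis by simp
  qed
  have Z: "cinner u z = 0" if uW: "u \<in> W" for u
  proof -
    have "Re (cinner (\<i> *s u) z) = 0" using reZ Wsm uW by blast
    hence "Im (cinner u z) = 0" by (simp add: cinner_smult_left)
    thus ?thesis using reZ[OF uW] by (simp add: complex_eq_iff)
  qed
  have zW: "z \<in> W"
    unfolding W_def mem_Collect_eq
  proof (intro allI impI)
    fix i assume i: "i < k"
    have "cinner (f i) (A *v m) = cinner (A *v f i) m" by (rule herm_inner[OF herm])
    also have "\<dots> = 0" using eig i mW by (simp add: cinner_smult_left W_def)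
    finally show "cinner (f i) z = 0" using mW i by (simp add: z_def cinner_diff_right cinner_smult_right W_def)
  qed
  have "z = 0" using Z[OF zW] cinner_self_eq_0 by blast
  hence "A *v m = complex_of_real M *s m" unfolding z_def by simp
  thus ?thesis using mW mm unfolding W_def by blast
qed
lemma eig_family:
  fixes A :: "complex^'n^'n"
  assumes herm: "hermitian_op A"
  shows "k \<le> CARD('n) \<Longrightarrow> \<exists>f lam. (\<forall>i<k. \<forall>j<k. cinner (f i) (f j) = (if i = j then 1 else 0))
            \<and> (\<forall>i<k. A *v f i = complex_of_real (lam i) *s f i)"
proof (induction k)
  case 0 thus ?case by simp
next
  case (Suc k)
  then obtain f lam where on: "\<forall>i<k. \<forall>j<k. cinner (f i) (f j) = (if i = j then 1 else 0)"
    and eig: "\<forall>i<k. A *v f i = complex_of_real (lam i) *s f i" by auto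
  obtain m M where m: "\<forall>i<k. cinner (f i) m = 0" "cinner m m = 1" "A *v m = complex_of_real M *s m"
    using eig_step[OF herm on eig] Suc.prems by auto
  have mi: "\<forall>i<k. cinner m (f i) = 0" using m(1) cinner_cnj by (metis complex_cnj_zero)
  show ?case
  proof (intro exI conjI)
    show "\<forall>i<Suc k. \<forall>j<Suc k. cinner ((f(k := m)) i) ((f(k := m)) j) = (if i = j then 1 else 0)"
      using on m mi by (auto simp: less_Suc_eq)
    show "\<forall>i<Suc k. A *v (f(k := m)) i = complex_of_real ((lam(k := M)) i) *s (f(k := m)) i"
      using eig m by (auto simp: less_Suc_eq)
  qed
qed

lemma spectral_exists:
  fixes A :: "complex^'n^'n"
  assumes herm: "hermitian_op A"
  shows "\<exists>lam psi. is_spectral_decomp A lam psi"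
proof -
  obtain f lam where on: "\<forall>i<CARD('n). \<forall>j<CARD('n). cinner (f i) (f j) = (if i = j then 1 else 0)"
    and eig: "\<forall>i<CARD('n). A *v f i = complex_of_real (lam i) *s f i"
    using eig_family[OF herm, of "CARD('n)"] by auto
  obtain h where h: "bij_betw h (UNIV::'n set) {0..<CARD('n)}"
    using ex_bij_betw_finite_nat[of "UNIV::'n set"] by auto
  define psi where "psi j = f (h j)" for j
  define mu where "mu j = lam (h j)" for j
  have hlt: "h j < CARD('n)" for j using h by (auto simp: bij_betw_def)
  have hinj: "h j = h k \<longleftrightarrow> j = k" for j k using h by (auto simp: bij_betw_def inj_on_def)
  have onb: "ONB psi" unfolding ONB_def psi_def using on hlt hinj by simp
  have eigp: "A *v psi j = complex_of_real (mu j) *s psi j" for j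
    unfolding psi_def mu_def using eig hlt by simp
  have "A $ a $ b = (\<Sum>j\<in>UNIV. complex_of_real (mu j) * outer (psi j) (psi j) $ a $ b)" for a b
  proof -
    have "A $ a $ b = (\<Sum>c\<in>UNIV. A $ a $ c * (\<Sum>j\<in>UNIV. psi j $ c * cnj (psi j $ b)))"
      by (simp add: ONB_complete[OF onb])
    also have "\<dots> = (\<Sum>j\<in>UNIV. (A *v psi j) $ a * cnj (psi j $ b))"
      by (simp add: matrix_vector_mult_def sum_distrib_left sum_distrib_right mult_ac)
         (rule sum.swap)
    also have "\<dots> = (\<Sum>j\<in>UNIV. complex_of_real (mu j) * outer (psi j) (psi j) $ a $ b)"
      by (simp add: eigp outer_def mult_ac)
    finally show ?thesis .
  qed
  hence "A = (\<Sum>j\<in>UNIV. (\<chi> a b. complex_of_real (mu j) * outer (psi j) (psi j) $ a $ b))"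
    by (simp add: vec_eq_iff)
  thus ?thesis using onb unfolding is_spectral_decomp_def ONB_def by blast
qed


lemma ifz_mult[simp]: "(if P then x else 0) * y = (if P then x * y else (0::'a::mult_zero))" by simp
lemma mult_ifz[simp]: "y * (if P then x else 0) = (if P then y * x else (0::'a::mult_zero))" by simp
lemma ifz_smult[simp]: "(if P then x else 0) *s v = (if P then x *s v else (0::complex^'n))" by simp
lemma cinner_sum_right: "cinner u (\<Sum>j\<in>S. g j) = (\<Sum>j\<in>S. cinner u (g j))"
  by (simp add: cinner_def sum_distrib_left) (rule sum.swap)
lemma cinner_sum_left: "cinner (\<Sum>j\<in>S. g j) u = (\<Sum>j\<in>S. cinner (g j) u)"
  by (simp add: cinner_def sum_distrib_right cnj_sum) (rule sum.swap)
lemma mv_sum: "A *v (\<Sum>j\<in>S. g j) = (\<Sum>j\<in>S. A *v (g j::complex^'n))"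
  by (simp add: vec_eq_iff matrix_vector_mult_def sum_distrib_left, rule allI, rule sum.swap)
lemma ONB_inner: "ONB psi \<Longrightarrow> cinner (psi j) (psi k) = (if j = k then 1 else 0)"
  by (simp add: ONB_def)

lemma SD_onb: "is_spectral_decomp A lam psi \<Longrightarrow> ONB psi"
  by (simp add: is_spectral_decomp_def ONB_def)

lemma SD_entry: "is_spectral_decomp A lam psi \<Longrightarrow>
   A $ a $ b = (\<Sum>j\<in>UNIV. complex_of_real (lam j) * (psi j $ a * cnj (psi j $ b)))"
  unfolding is_spectral_decomp_def by (simp add: outer_def)

lemma SD_apply:
  assumes "is_spectral_decomp A lam psi"
  shows "(A *v v) $ a = (\<Sum>j\<in>UNIV. complex_of_real (lam j) * cinner (psi j) v * psi j $ a)"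
  by (simp add: matrix_vector_mult_def SD_entry[OF assms] cinner_def sum_distrib_left
      sum_distrib_right mult_ac) (rule sum.swap)

lemma SD_apply_vec:
  assumes "is_spectral_decomp A lam psi"
  shows "A *v v = (\<Sum>j\<in>UNIV. (complex_of_real (lam j) * cinner (psi j) v) *s psi j)"
  by (simp add: vec_eq_iff SD_apply[OF assms])

lemma SD_inner:
  assumes sd: "is_spectral_decomp A lam psi"
  shows "cinner (psi k) (A *v v) = complex_of_real (lam k) * cinner (psi k) v"
proof -
  have o: "ONB psi" using SD_onb[OF sd] .
  have "cinner (psi k) (A *v v) = (\<Sum>j\<in>UNIV. complex_of_real (lam j) * cinner (psi j) v * cinner (psi k) (psi j))"
    by (simp add: SD_apply_vec[OF sd] cinner_sum_right cinner_smult_right)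
  also have "\<dots> = complex_of_real (lam k) * cinner (psi k) v"
    using o unfolding ONB_def by (simp add: eq_commute)
  finally show ?thesis .
qed

lemma SD_eig:
  assumes sd: "is_spectral_decomp A lam psi"
  shows "A *v psi k = complex_of_real (lam k) *s psi k"
proof -
  have o: "ONB psi" using SD_onb[OF sd] .
  show ?thesis
    by (simp add: SD_apply_vec[OF sd] ONB_inner[OF o] cinner_smult_right)
qed

lemma SD_herm:
  assumes sd: "is_spectral_decomp A lam psi" shows "hermitian_op A"
  unfolding hermitian_op_def by (simp add: SD_entry[OF sd] mult_ac)

lemma rows_G:
  fixes U :: "'n::finite \<Rightarrow> 'm::finite \<Rightarrow> complex"
  assumes u: "\<And>a b. (\<Sum>k\<in>UNIV. U a k * cnj (U b k)) = (if a = b then 1 else 0)"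
  shows "(\<Sum>k\<in>UNIV. (\<Sum>b\<in>UNIV. x b * U b k) * cnj (\<Sum>b\<in>UNIV. y b * U b k)) = (\<Sum>b\<in>UNIV. x b * cnj (y b))"
proof -
  have "(\<Sum>k\<in>UNIV. (\<Sum>b\<in>UNIV. x b * U b k) * cnj (\<Sum>b\<in>UNIV. y b * U b k))
      = (\<Sum>k\<in>UNIV. \<Sum>b'\<in>UNIV. \<Sum>b\<in>UNIV. x b * (cnj (y b') * (U b k * cnj (U b' k))))"
    by (simp add: sum_distrib_left sum_distrib_right mult_ac cnj_sum)
  also have "\<dots> = (\<Sum>b'\<in>UNIV. \<Sum>b\<in>UNIV. \<Sum>k\<in>UNIV. x b * (cnj (y b') * (U b k * cnj (U b' k))))"
    by (subst sum.swap) (rule sum.cong[OF refl], rule sum.swap)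
  also have "\<dots> = (\<Sum>b'\<in>UNIV. \<Sum>b\<in>UNIV. x b * cnj (y b') * (\<Sum>k\<in>UNIV. U b k * cnj (U b' k)))"
    by (simp add: sum_distrib_left mult_ac)
  also have "\<dots> = (\<Sum>b\<in>UNIV. x b * cnj (y b))" by (simp add: u)
  finally show ?thesis .
qed

definition FS :: "(real \<Rightarrow> real \<Rightarrow> real) \<Rightarrow> complex^'n^'n \<Rightarrow> ('n \<Rightarrow> real) \<Rightarrow> ('n \<Rightarrow> complex^'n) \<Rightarrow> real" where
  "FS h D lam psi = (\<Sum>j\<in>UNIV. \<Sum>k\<in>UNIV. h (lam j) (lam k) * (cmod (cinner (psi j) (D *v psi k)))^2)"

lemma FS_invariant:
  fixes A D :: "complex^'n^'n"
  assumes sd1: "is_spectral_decomp A lam psi" and sd2: "is_spectral_decomp A mu phi"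
  shows "FS h D lam psi = FS h D mu phi"
proof -
  have opsi: "ONB psi" using SD_onb[OF sd1] .
  have ophi: "ONB phi" using SD_onb[OF sd2] .
  define U where "U a j = cinner (phi a) (psi j)" for a j
  define Y where "Y a b = cinner (phi a) (D *v phi b)" for a b
  define Z where "Z a b = complex_of_real (h (mu a) (mu b)) * Y a b" for a b
  define X where "X j k = cinner (psi j) (D *v psi k)" for j k
  have exp: "psi j = (\<Sum>a\<in>UNIV. U a j *s phi a)" for j
    unfolding vec_eq_iff U_def using ONB_expand[OF ophi, of "psi j"] by simp
  have eqv: "lam j = mu a" if "U a j \<noteq> 0" for a j
  proof -
    have "cinner (phi a) (A *v psi j) = complex_of_real (lam j) * U a j"
      by (simp add: SD_eig[OF sd1] cinner_smult_right U_def)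
    moreover have "cinner (phi a) (A *v psi j) = complex_of_real (mu a) * U a j"
      by (simp add: SD_inner[OF sd2] U_def)
    ultimately have "complex_of_real (lam j) = complex_of_real (mu a)" using that by simp
    thus ?thesis by simp
  qed
  have uni: "(\<Sum>j\<in>UNIV. U a j * cnj (U b j)) = (if a = b then 1 else 0)" for a b
  proof -
    have "(\<Sum>j\<in>UNIV. U a j * cnj (U b j)) = (\<Sum>j\<in>UNIV. cinner (phi a) (psi j) * cinner (psi j) (phi b))"
      unfolding U_def using cinner_cnj by metis
    also have "\<dots> = (if a = b then 1 else 0)" by (simp add: ONB_parseval[OF opsi] ONB_inner[OF ophi])
    finally show ?thesis .
  qed
  have uni2: "(\<Sum>j\<in>UNIV. cnj (U a j) * cnj (cnj (U b j))) = (if a = b then 1 else 0)" for a b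
  proof -
    have "(\<Sum>j\<in>UNIV. cnj (U a j) * cnj (cnj (U b j))) = cnj (\<Sum>j\<in>UNIV. U a j * cnj (U b j))"
      by (simp add: cnj_sum mult.commute)
    also have "\<dots> = (if a = b then 1 else 0)" by (simp add: uni)
    finally show ?thesis .
  qed
  have Xe: "X j k = (\<Sum>b\<in>UNIV. (\<Sum>a\<in>UNIV. cnj (U a j) * Y a b) * U b k)" for j k
  proof -
    have "X j k = (\<Sum>b\<in>UNIV. U b k * (\<Sum>a\<in>UNIV. cnj (U a j) * Y a b))"
      unfolding X_def Y_def
      by (subst (1 2) exp) (simp add: cinner_sum_left cinner_sum_right cinner_smult_left cinner_smult_right mv_sum mv_smult)
    also have "\<dots> = (\<Sum>b\<in>UNIV. (\<Sum>a\<in>UNIV. cnj (U a j) * Y a b) * U b k)"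
      by (simp add: mult.commute)
    finally show ?thesis .
  qed
  have Xh: "complex_of_real (h (lam j) (lam k)) * X j k = (\<Sum>b\<in>UNIV. (\<Sum>a\<in>UNIV. cnj (U a j) * Z a b) * U b k)" for j k
  proof -
    have "complex_of_real (h (lam j) (lam k)) * X j k
        = (\<Sum>b\<in>UNIV. \<Sum>a\<in>UNIV. complex_of_real (h (lam j) (lam k)) * (cnj (U a j) * Y a b * U b k))"
      by (simp add: Xe sum_distrib_left sum_distrib_right mult_ac)
    also have "\<dots> = (\<Sum>b\<in>UNIV. \<Sum>a\<in>UNIV. cnj (U a j) * Z a b * U b k)"
    proof (intro sum.cong refl)
      fix a b
      show "complex_of_real (h (lam j) (lam k)) * (cnj (U a j) * Y a b * U b k) = cnj (U a j) * Z a b * U b k"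
      proof (cases "U a j = 0 \<or> U b k = 0")
        case True thus ?thesis by auto
      next
        case False
        hence "lam j = mu a" "lam k = mu b" using eqv by auto
        thus ?thesis by (simp add: Z_def mult_ac)
      qed
    qed
    also have "\<dots> = (\<Sum>b\<in>UNIV. (\<Sum>a\<in>UNIV. cnj (U a j) * Z a b) * U b k)"
      by (simp add: sum_distrib_right)
    finally show ?thesis .
  qed
  have "complex_of_real (FS h D lam psi) = (\<Sum>j\<in>UNIV. \<Sum>k\<in>UNIV. (complex_of_real (h (lam j) (lam k)) * X j k) * cnj (X j k))"
    unfolding FS_def X_def by (simp add: complex_norm_square[unfolded of_real_power] mult_ac)
  also have "\<dots> = (\<Sum>j\<in>UNIV. \<Sum>b\<in>UNIV. (\<Sum>a\<in>UNIV. cnj (U a j) * Z a b) * cnj (\<Sum>a\<in>UNIV. cnj (U a j) * Y a b))"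
    unfolding Xh by (subst Xe) (simp only: rows_G[of U, OF uni])
  also have "\<dots> = (\<Sum>b\<in>UNIV. \<Sum>j\<in>UNIV. (\<Sum>a\<in>UNIV. Z a b * cnj (U a j)) * cnj (\<Sum>a\<in>UNIV. Y a b * cnj (U a j)))"
    by (subst sum.swap) (simp add: mult.commute)
  also have "\<dots> = (\<Sum>b\<in>UNIV. \<Sum>a\<in>UNIV. Z a b * cnj (Y a b))"
    by (simp only: rows_G[of "\<lambda>a j. cnj (U a j)", OF uni2])
  also have "\<dots> = complex_of_real (FS h D mu phi)"
    unfolding FS_def Z_def Y_def by (subst sum.swap) (simp add: complex_norm_square[unfolded of_real_power] mult_ac)
  finally show ?thesis by simp
qed


lemma ONB_ext:
  assumes o: "ONB psi" and h: "\<And>k. cinner (psi k) u = cinner (psi k) v"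
  shows "u = v"
  unfolding vec_eq_iff using ONB_expand[OF o, of u] ONB_expand[OF o, of v] h by simp

lemma mvm: "(P ** Q) *v y = P *v (Q *v (y::complex^'n))"
  by (simp add: matrix_vector_mul_assoc)

lemma proj_orth:
  fixes P :: "complex^'n^'n"
  assumes h: "hermitian_op P" and i: "P ** P = P"
  shows "cinner (P *v w) (y - P *v y) = 0"
proof -
  have "cinner (P *v w) (y - P *v y) = cinner w (P *v (y - P *v y))"
    using herm_inner[OF h] by simp
  also have "P *v (y - P *v y) = 0" by (simp add: mv_diff flip: mvm, simp add: i)
  finally show ?thesis by simp
qed

lemma proj_unique:
  fixes P Q :: "complex^'n^'n"
  assumes hP: "hermitian_op P" and iP: "P ** P = P"
    and hQ: "hermitian_op Q" and iQ: "Q ** Q = Q"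
    and r: "range (\<lambda>y. P *v y) = range (\<lambda>y. Q *v y)"
  shows "P = Q"
  unfolding matrix_eq
proof
  fix y
  define d where "d = P *v y - Q *v y"
  obtain y' where y': "Q *v y = P *v y'" using r by (metis rangeI rangeE)
  have dP: "d = P *v (y - y')" by (simp add: d_def mv_diff y')
  obtain y'' where y'': "d = Q *v y''" using r dP by (metis rangeI rangeE)
  have o1: "cinner d (y - P *v y) = 0" using proj_orth[OF hP iP] dP by simp
  have o2: "cinner d (y - Q *v y) = 0" using proj_orth[OF hQ iQ] y'' by simp
  have "cinner d d = cinner d (y - Q *v y) - cinner d (y - P *v y)"
    by (simp add: d_def cinner_diff_right)
  hence "cinner d d = 0" using o1 o2 by simp
  hence "d = 0" using cinner_self_eq_0 by blast
  thus "P *v y = Q *v y" by (simp add: d_def)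
qed

definition KP :: "('n::finite \<Rightarrow> real) \<Rightarrow> ('n \<Rightarrow> complex^'n) \<Rightarrow> complex^'n^'n" where
  "KP lam psi = (\<chi> a b. \<Sum>j\<in>UNIV. if lam j = 0 then psi j $ a * cnj (psi j $ b) else 0)"

lemma KP_apply: "KP lam psi *v y = (\<Sum>j\<in>UNIV. (if lam j = 0 then cinner (psi j) y else 0) *s psi j)"
proof -
  have "(KP lam psi *v y) $ i = (\<Sum>j\<in>UNIV. \<Sum>x\<in>UNIV. if lam x = 0 then y $ j * (psi x $ i * cnj (psi x $ j)) else 0)" for i
    by (simp add: KP_def matrix_vector_mult_def sum_distrib_left mult_ac)
  also have "\<dots> i = (\<Sum>x\<in>UNIV. if lam x = 0 then cinner (psi x) y * psi x $ i else 0)" for i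
    by (subst sum.swap) (rule sum.cong[OF refl], auto simp: cinner_def sum_distrib_left mult_ac)
  finally show ?thesis by (simp add: vec_eq_iff if_distrib[where f="\<lambda>v. v $ _"] cong: if_cong)
qed

lemma KP_inner:
  assumes o: "ONB psi"
  shows "cinner (psi k) (KP lam psi *v y) = (if lam k = 0 then cinner (psi k) y else 0)"
proof -
  have "cinner (psi k) (KP lam psi *v y) = (\<Sum>j\<in>UNIV. if j = k then (if lam j = 0 then cinner (psi j) y else 0) else 0)"
    unfolding KP_apply cinner_sum_right
    by (rule sum.cong) (auto simp: cinner_smult_right ONB_inner[OF o] simp del: ifz_smult)
  thus ?thesis by simp
qed

lemma KP_herm: "hermitian_op (KP lam psi)"
  unfolding hermitian_op_def KP_def by (simp add: cnj_sum if_distrib[where f=cnj] mult.commute cong: if_cong)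

lemma KP_idem:
  assumes o: "ONB psi"
  shows "KP lam psi ** KP lam psi = KP lam psi"
  unfolding matrix_eq
proof
  fix y show "(KP lam psi ** KP lam psi) *v y = KP lam psi *v y"
    by (rule ONB_ext[OF o]) (simp add: mvm KP_inner[OF o])
qed

lemma SD_ker:
  assumes sd: "is_spectral_decomp A lam psi"
  shows "A *v v = 0 \<longleftrightarrow> (\<forall>k. lam k = 0 \<or> cinner (psi k) v = 0)"
proof
  assume "A *v v = 0"
  hence "cinner (psi k) (A *v v) = 0" for k by simp
  thus "\<forall>k. lam k = 0 \<or> cinner (psi k) v = 0" by (simp add: SD_inner[OF sd])
next
  assume h: "\<forall>k. lam k = 0 \<or> cinner (psi k) v = 0"
  show "A *v v = 0"
    by (rule ONB_ext[OF SD_onb[OF sd]]) (use h in \<open>auto simp: SD_inner[OF sd]\<close>)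
qed

lemma KP_range:
  assumes sd: "is_spectral_decomp A lam psi"
  shows "range (\<lambda>y. KP lam psi *v y) = {v. A *v v = 0}"
proof -
  have o: "ONB psi" using SD_onb[OF sd] .
  show ?thesis
  proof (intro set_eqI iffI)
    fix v assume "v \<in> range (\<lambda>y. KP lam psi *v y)"
    then obtain y where y: "v = KP lam psi *v y" by auto
    show "v \<in> {v. A *v v = 0}" unfolding mem_Collect_eq SD_ker[OF sd] y
      by (simp add: KP_inner[OF o])
  next
    fix v assume "v \<in> {v. A *v v = 0}"
    hence h: "\<forall>k. lam k = 0 \<or> cinner (psi k) v = 0" using SD_ker[OF sd] by simp
    have "KP lam psi *v v = v"
      by (rule ONB_ext[OF o]) (use h in \<open>auto simp: KP_inner[OF o]\<close>)
    thus "v \<in> range (\<lambda>y. KP lam psi *v y)" by (metis rangeI)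
  qed
qed

lemma kernel_proj_eq:
  assumes sd: "is_spectral_decomp A lam psi"
  shows "kernel_proj A = KP lam psi"
  unfolding kernel_proj_def
proof (rule the_equality)
  have o: "ONB psi" using SD_onb[OF sd] .
  show "hermitian_op (KP lam psi) \<and> KP lam psi ** KP lam psi = KP lam psi \<and>
        range (\<lambda>y. KP lam psi *v y) = {v. A *v v = 0}"
    using KP_herm KP_idem[OF o] KP_range[OF sd] by blast
  fix P assume "hermitian_op P \<and> P ** P = P \<and> range (\<lambda>y. P *v y) = {v. A *v v = 0}"
  thus "P = KP lam psi" using proj_unique[OF _ _ KP_herm KP_idem[OF o]] KP_range[OF sd] by metis
qed

lemma KP_cond:
  assumes o: "ONB psi"
  shows "KP lam psi ** D ** KP lam psi = 0 \<longleftrightarrow>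
         (\<forall>j k. lam j = 0 \<and> lam k = 0 \<longrightarrow> cinner (psi j) (D *v psi k) = 0)"
proof
  assume h: "KP lam psi ** D ** KP lam psi = 0"
  show "\<forall>j k. lam j = 0 \<and> lam k = 0 \<longrightarrow> cinner (psi j) (D *v psi k) = 0"
  proof (intro allI impI)
    fix j k assume z: "lam j = 0 \<and> lam k = 0"
    have fix1: "KP lam psi *v psi i = psi i" if "lam i = 0" for i
      by (rule ONB_ext[OF o]) (use that in \<open>auto simp: KP_inner[OF o] ONB_inner[OF o]\<close>)
    have "cinner (psi j) (D *v psi k) = cinner (KP lam psi *v psi j) (D *v (KP lam psi *v psi k))"
      using z fix1 by simp
    also have "\<dots> = cinner (psi j) ((KP lam psi ** D ** KP lam psi) *v psi k)"
      by (simp add: mvm herm_inner[OF KP_herm])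
    also have "\<dots> = 0" using h by simp
    finally show "cinner (psi j) (D *v psi k) = 0" .
  qed
next
  assume h: "\<forall>j k. lam j = 0 \<and> lam k = 0 \<longrightarrow> cinner (psi j) (D *v psi k) = 0"
  show "KP lam psi ** D ** KP lam psi = 0"
    unfolding matrix_eq
  proof
    fix y
    show "(KP lam psi ** D ** KP lam psi) *v y = 0 *v y"
    proof (rule ONB_ext[OF o])
      fix i
      have "cinner (psi i) (D *v (KP lam psi *v y)) = 0" if "lam i = 0"
        using h that by (simp add: KP_apply mv_sum mv_smult cinner_sum_right cinner_smult_right
            del: ifz_smult) (rule sum.neutral, auto)
      thus "cinner (psi i) ((KP lam psi ** D ** KP lam psi) *v y) = cinner (psi i) (0 *v y)"
        by (simp add: mvm KP_inner[OF o])
    qed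
  qed
qed


definition hF :: "real \<Rightarrow> real \<Rightarrow> real" where
  "hF x y = (if x + y > 0 then 1 / (x + y) else 0)"

lemma set_sum_FS:
  "(\<Sum>(j,k)\<in>{(j,k). lam j + lam k > 0}. (cmod (cinner (psi j) (D *v psi k)))^2 / (lam j + lam k))
    = FS hF D lam (psi :: 'n::finite \<Rightarrow> complex^'n)"
proof -
  let ?g = "\<lambda>j k. (cmod (cinner (psi j) (D *v psi k)))^2 / (lam j + lam k)"
  have "(\<Sum>(j,k)\<in>{(j,k). lam j + lam k > 0}. ?g j k)
      = (\<Sum>(j,k)\<in>{x\<in>UNIV. (case x of (j,k) \<Rightarrow> lam j + lam k > 0)}. ?g j k)"
    by (rule sum.cong) auto
  also have "\<dots> = (\<Sum>x\<in>UNIV. if (case x of (j,k) \<Rightarrow> lam j + lam k > 0) then (case x of (j,k) \<Rightarrow> ?g j k) else 0)"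
    by (rule sum.inter_filter) simp
  also have "\<dots> = (\<Sum>(j,k)\<in>UNIV \<times> UNIV. if lam j + lam k > 0 then ?g j k else 0)"
    by (rule sum.cong) auto
  also have "\<dots> = (\<Sum>j\<in>UNIV. \<Sum>k\<in>UNIV. if lam j + lam k > 0 then ?g j k else 0)"
    by (rule sum.cartesian_product[symmetric])
  also have "\<dots> = FS hF D lam psi"
    unfolding FS_def hF_def by (intro sum.cong refl) auto
  finally show ?thesis .
qed

lemma sld_eq:
  assumes sd: "is_spectral_decomp A lam psi"
  shows "sld_fisher A D = (if (\<forall>j k. lam j = 0 \<and> lam k = 0 \<longrightarrow> cinner (psi j) (D *v psi k) = 0)
           then ereal (2 * FS hF D lam psi) else \<infinity>)"
proof -
  have ex: "\<exists>p. (case p of (l, ps) \<Rightarrow> is_spectral_decomp A l ps)"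
    using spectral_exists[OF SD_herm[OF sd]] by auto
  obtain l ps where lp: "(SOME p. case p of (l, ps) \<Rightarrow> is_spectral_decomp A l ps) = (l, ps)"
    by (cases "SOME p. case p of (l, ps) \<Rightarrow> is_spectral_decomp A l ps") auto
  have sd2: "is_spectral_decomp A l ps" using someI_ex[OF ex] lp by simp
  have inv: "FS hF D l ps = FS hF D lam psi" by (rule FS_invariant[OF sd2 sd])
  show ?thesis
    unfolding sld_fisher_def kernel_proj_eq[OF sd] KP_cond[OF SD_onb[OF sd]] lp
    by (simp add: set_sum_FS inv)
qed



lemma SD_intro:
  assumes o: "ONB psi" and e: "\<And>a b. A $ a $ b = (\<Sum>j\<in>UNIV. complex_of_real (lam j) * (psi j $ a * cnj (psi j $ b)))"
  shows "is_spectral_decomp A lam psi"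
  using o unfolding is_spectral_decomp_def ONB_def by (simp add: vec_eq_iff e outer_def)

lemma mat_scaleR_nth: "(c *\<^sub>R (M::complex^'n^'m)) $ a $ b = complex_of_real c * M $ a $ b"
  unfolding vector_scaleR_component by (simp add: scaleR_conv_of_real)

lemma SD_perturb:
  fixes A :: "complex^'n^'n"
  assumes sd: "is_spectral_decomp A lam psi"
  shows "is_spectral_decomp ((1 - e) *\<^sub>R A + c *\<^sub>R mat 1) (\<lambda>j. (1 - e) * lam j + c) psi"
proof (rule SD_intro[OF SD_onb[OF sd]])
  fix a b
  have "((1 - e) *\<^sub>R A + c *\<^sub>R mat 1) $ a $ b = complex_of_real (1 - e) * A $ a $ b + complex_of_real c * (if a = b then 1 else 0)"
    unfolding vector_add_component mat_scaleR_nth by (simp add: mat_def)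
  also have "\<dots> = complex_of_real (1 - e) * (\<Sum>j\<in>UNIV. complex_of_real (lam j) * (psi j $ a * cnj (psi j $ b)))
       + complex_of_real c * (\<Sum>j\<in>UNIV. psi j $ a * cnj (psi j $ b))"
    by (simp add: SD_entry[OF sd] ONB_complete[OF SD_onb[OF sd]])
  also have "\<dots> = (\<Sum>j\<in>UNIV. complex_of_real ((1 - e) * lam j + c) * (psi j $ a * cnj (psi j $ b)))"
    by (simp add: sum_distrib_left sum.distrib[symmetric] ring_distribs mult_ac)
  finally show "((1 - e) *\<^sub>R A + c *\<^sub>R mat 1) $ a $ b = (\<Sum>j\<in>UNIV. complex_of_real ((1 - e) * lam j + c) * (psi j $ a * cnj (psi j $ b)))" .
qed

lemma mv_scaleR_mat: "(c *\<^sub>R M) *v v = c *\<^sub>R (M *v (v::complex^'n))"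
  by (simp add: vec_eq_iff matrix_vector_mult_def scaleR_sum_right)

lemma FS_scale:
  "FS h (c *\<^sub>R D) lam psi = (\<Sum>j\<in>UNIV. \<Sum>k\<in>UNIV. h (lam j) (lam k) * (c^2 * (cmod (cinner (psi j) (D *v psi k)))^2))"
  unfolding FS_def
  by (simp add: mv_scaleR_mat cinner_scaleR_right norm_mult power_mult_distrib)



theorem mainTheorem1:
  fixes rho :: "real \<Rightarrow> complex^'n^'n" and \<Theta> :: "real set" and \<theta> :: real
  assumes "open \<Theta>" and "\<theta> \<in> \<Theta>"
    and "\<forall>t\<in>\<Theta>. density_op (rho t)"
    and "\<forall>t\<in>\<Theta>. rho differentiable (at t)"
  shows "((\<lambda>\<epsilon>. fisher_info (\<lambda>t. (1 - \<epsilon>) *\<^sub>R rho t + (\<epsilon> / real CARD('n)) *\<^sub>R mat 1) \<theta>)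
            \<longlongrightarrow> fisher_info rho \<theta>) (at_right 0)"
proof -
  define D where "D = vector_derivative rho (at \<theta>)"
  define d where "d = real CARD('n)"
  have d0: "d > 0" unfolding d_def by simp
  have dens: "density_op (rho \<theta>)" using assms(2,3) by blast
  have herm: "hermitian_op (rho \<theta>)" using dens unfolding density_op_def by blast
  obtain lam psi where sd: "is_spectral_decomp (rho \<theta>) lam psi" using spectral_exists[OF herm] by blast
  have o: "ONB psi" using SD_onb[OF sd] .
  have lam_nn: "0 \<le> lam j" for j
  proof -
    have "cinner (psi j) (rho \<theta> *v psi j) = complex_of_real (lam j)"
      by (simp add: SD_inner[OF sd] ONB_inner[OF o])
    moreover have "0 \<le> Re (cinner (psi j) (rho \<theta> *v psi j))" using dens unfolding density_op_def by blast
    ultimately show ?thesis by simp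
  qed
  define X where "X j k = (cmod (cinner (psi j) (D *v psi k)))^2" for j k
  have X0: "0 \<le> X j k" for j k unfolding X_def by simp
  have hasD: "(rho has_vector_derivative D) (at \<theta>)"
    using assms(2,4) vector_derivative_works unfolding D_def by blast
  define mu where "mu e j = (1 - e) * lam j + e / d" for e j
  have deriv_e: "vector_derivative (\<lambda>t. (1 - e) *\<^sub>R rho t + (e / real CARD('n)) *\<^sub>R mat 1) (at \<theta>) = (1 - e) *\<^sub>R D" for e
  proof -
    have "((\<lambda>t. (1 - e) *\<^sub>R rho t + (e / real CARD('n)) *\<^sub>R mat 1) has_vector_derivative
          ((1 - e) *\<^sub>R D + 0 *\<^sub>R rho \<theta>) + 0) (at \<theta>)"
      by (rule has_vector_derivative_add[OF has_vector_derivative_scaleR[OF DERIV_const hasD] has_vector_derivative_const])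
    thus ?thesis using vector_derivative_at by fastforce
  qed
  have fi_e: "fisher_info (\<lambda>t. (1 - e) *\<^sub>R rho t + (e / real CARD('n)) *\<^sub>R mat 1) \<theta>
      = ereal (2 * (\<Sum>j\<in>UNIV. \<Sum>k\<in>UNIV. hF (mu e j) (mu e k) * ((1 - e)^2 * X j k)))"
    if e: "0 < e" "e < 1" for e
  proof -
    have sde: "is_spectral_decomp ((1 - e) *\<^sub>R rho \<theta> + (e / real CARD('n)) *\<^sub>R mat 1) (mu e) psi"
      using SD_perturb[OF sd, of e "e / d"] unfolding mu_def d_def by simp
    have mupos: "mu e j > 0" for j
      unfolding mu_def using e d0 lam_nn[of j] by (simp add: add_nonneg_pos)
    show ?thesis
      unfolding fisher_info_def deriv_e sld_eq[OF sde]
      using mupos by (simp add: FS_scale X_def less_le)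
  qed
  have fi0: "fisher_info rho \<theta> = (if (\<forall>j k. lam j = 0 \<and> lam k = 0 \<longrightarrow> cinner (psi j) (D *v psi k) = 0)
           then ereal (2 * (\<Sum>j\<in>UNIV. \<Sum>k\<in>UNIV. hF (lam j) (lam k) * X j k)) else \<infinity>)"
    unfolding fisher_info_def D_def[symmetric] sld_eq[OF sd] FS_def X_def by simp
  have ev: "eventually (\<lambda>e. e \<in> {0<..<1}) (at_right (0::real))" by (rule eventually_at_right_real) simp
  show ?thesis
  proof (cases "\<forall>j k. lam j = 0 \<and> lam k = 0 \<longrightarrow> cinner (psi j) (D *v psi k) = 0")
    case True
    have trm: "((\<lambda>e. hF (mu e j) (mu e k) * ((1 - e)^2 * X j k)) \<longlongrightarrow> hF (lam j) (lam k) * X j k) (at_right 0)" for j k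
    proof (cases "lam j + lam k > 0")
      case pos: True
      have ev2: "eventually (\<lambda>e. hF (mu e j) (mu e k) * ((1 - e)^2 * X j k)
          = 1 / ((1 - e) * lam j + e / d + ((1 - e) * lam k + e / d)) * ((1 - e)^2 * X j k)) (at_right 0)"
      proof (rule eventually_mono[OF ev])
        fix e :: real assume "e \<in> {0<..<1}"
        hence "mu e j + mu e k > 0" unfolding mu_def using lam_nn[of j] lam_nn[of k] d0
          by (simp add: add_pos_nonneg add_nonneg_pos)
        thus "hF (mu e j) (mu e k) * ((1 - e)^2 * X j k)
          = 1 / ((1 - e) * lam j + e / d + ((1 - e) * lam k + e / d)) * ((1 - e)^2 * X j k)"
          unfolding hF_def mu_def by simp
      qed
      have "((\<lambda>e. 1 / ((1 - e) * lam j + e / d + ((1 - e) * lam k + e / d)) * ((1 - e)^2 * X j k))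
          \<longlongrightarrow> 1 / ((1 - 0) * lam j + 0 / d + ((1 - 0) * lam k + 0 / d)) * ((1 - 0)^2 * X j k)) (at_right 0)"
        using pos d0 by (intro tendsto_intros) auto
      hence "((\<lambda>e. 1 / ((1 - e) * lam j + e / d + ((1 - e) * lam k + e / d)) * ((1 - e)^2 * X j k))
          \<longlongrightarrow> hF (lam j) (lam k) * X j k) (at_right 0)"
        using pos unfolding hF_def by simp
      thus ?thesis using tendsto_cong[OF ev2] by blast
    next
      case False
      hence "lam j = 0" "lam k = 0" using lam_nn[of j] lam_nn[of k] by linarith+
      hence "X j k = 0" using True unfolding X_def by simp
      thus ?thesis by simp
    qed
    have lim: "((\<lambda>e. ereal (2 * (\<Sum>j\<in>UNIV. \<Sum>k\<in>UNIV. hF (mu e j) (mu e k) * ((1 - e)^2 * X j k))))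
        \<longlongrightarrow> ereal (2 * (\<Sum>j\<in>UNIV. \<Sum>k\<in>UNIV. hF (lam j) (lam k) * X j k))) (at_right 0)"
      by (intro tendsto_ereal tendsto_mult_left tendsto_sum trm)
    have ev3: "eventually (\<lambda>e. fisher_info (\<lambda>t. (1 - e) *\<^sub>R rho t + (e / real CARD('n)) *\<^sub>R mat 1) \<theta>
        = ereal (2 * (\<Sum>j\<in>UNIV. \<Sum>k\<in>UNIV. hF (mu e j) (mu e k) * ((1 - e)^2 * X j k)))) (at_right 0)"
      by (rule eventually_mono[OF ev]) (simp add: fi_e)
    show ?thesis unfolding fi0 using True tendsto_cong[OF ev3] lim by simp
  next
    case False
    then obtain j0 k0 where z: "lam j0 = 0" "lam k0 = 0" and nz: "cinner (psi j0) (D *v psi k0) \<noteq> 0" by blast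
    have Xp: "X j0 k0 > 0" using nz unfolding X_def by simp
    have "((\<lambda>e. fisher_info (\<lambda>t. (1 - e) *\<^sub>R rho t + (e / real CARD('n)) *\<^sub>R mat 1) \<theta>) \<longlongrightarrow> \<infinity>) (at_right 0)"
      unfolding tendsto_PInfty
    proof
      fix r :: real
      define c where "c = X j0 k0 * d / 4"
      have c0: "c > 0" unfolding c_def using Xp d0 by simp
      define b where "b = min (1/2) (c / (\<bar>r\<bar> + 1))"
      have b0: "b > 0" unfolding b_def using c0 by (simp add: add_nonneg_pos)
      show "eventually (\<lambda>e. ereal r < fisher_info (\<lambda>t. (1 - e) *\<^sub>R rho t + (e / real CARD('n)) *\<^sub>R mat 1) \<theta>) (at_right 0)"
      proof (rule eventually_mono[OF eventually_at_right_real[OF b0]])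
        fix e assume e: "e \<in> {0<..<b}"
        hence e0: "0 < e" and e1: "e \<le> 1/2" and ec: "e < c / (\<bar>r\<bar> + 1)" unfolding b_def by auto
        have T0: "0 \<le> hF (mu e j) (mu e k) * ((1 - e)^2 * X j k)" for j k
          unfolding hF_def using X0[of j k] by simp
        have "hF (mu e j0) (mu e k0) * ((1 - e)^2 * X j0 k0)
            \<le> (\<Sum>k\<in>UNIV. hF (mu e j0) (mu e k) * ((1 - e)^2 * X j0 k))"
          by (rule member_le_sum) (use T0 in auto)
        also have "\<dots> \<le> (\<Sum>j\<in>UNIV. \<Sum>k\<in>UNIV. hF (mu e j) (mu e k) * ((1 - e)^2 * X j k))"
          by (rule member_le_sum[where f="\<lambda>j. \<Sum>k\<in>UNIV. hF (mu e j) (mu e k) * ((1 - e)^2 * X j k)"])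
             (use T0 in \<open>auto intro: sum_nonneg\<close>)
        finally have le: "hF (mu e j0) (mu e k0) * ((1 - e)^2 * X j0 k0)
            \<le> (\<Sum>j\<in>UNIV. \<Sum>k\<in>UNIV. hF (mu e j) (mu e k) * ((1 - e)^2 * X j k))" .
        have hv: "hF (mu e j0) (mu e k0) = d / (2 * e)"
          unfolding hF_def mu_def using z e0 d0 by (simp add: field_simps)
        have q: "(1 - e)^2 \<ge> 1/4"
        proof -
          have "(1/2::real)^2 \<le> (1 - e)^2" using e1 by (intro power_mono) auto
          thus ?thesis by (simp add: power2_eq_square)
        qed
        have "c / e \<le> 2 * (hF (mu e j0) (mu e k0) * ((1 - e)^2 * X j0 k0))"
        proof -
          have i1: "2 * (hF (mu e j0) (mu e k0) * ((1 - e)^2 * X j0 k0)) = ((1 - e)^2 * (X j0 k0 * d)) / e"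
            unfolding hv using e0 by (simp add: field_simps)
          have i2: "c / e = ((1/4) * (X j0 k0 * d)) / e" unfolding c_def by simp
          have i3: "(1/4) * (X j0 k0 * d) \<le> (1 - e)^2 * (X j0 k0 * d)"
            using q Xp d0 by (intro mult_right_mono) auto
          have i4: "((1/4) * (X j0 k0 * d)) / e \<le> ((1 - e)^2 * (X j0 k0 * d)) / e"
            by (rule divide_right_mono[OF i3]) (use e0 in simp)
          show ?thesis unfolding i1 i2 by (rule i4)
        qed
        moreover have "\<bar>r\<bar> + 1 < c / e"
          using ec e0 by (simp add: field_simps)
        ultimately have "r < 2 * (\<Sum>j\<in>UNIV. \<Sum>k\<in>UNIV. hF (mu e j) (mu e k) * ((1 - e)^2 * X j k))"
          using le by linarith
        thus "ereal r < fisher_info (\<lambda>t. (1 - e) *\<^sub>R rho t + (e / real CARD('n)) *\<^sub>R mat 1) \<theta>"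
          using fi_e e0 e1 by simp
      qed
    qed
    moreover have "fisher_info rho \<theta> = \<infinity>" using fi0 False by (simp only: if_False)
    ultimately show ?thesis by simp
  qed
qed


end
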